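(* Let $X$ be a $T_0$ space. For every irreducible subset $F$ of $X$ and every $x\in F^\delta$, there exists a net $(x_i)_{i\in I}$ with all $x_i\in F$ that $GSI_2$-converges to $x$.
   Context: For a $T_0$ space $X$, the specialization order is $x\le y$ iff $x\in \mathrm{cl}\{y\}$; $\uparrow A=\{x: a\le x\text{ for some } a\in A\}$, $\uparrow x=\uparrow\{x\}$; $A^\uparrow$, $A^\downarrow$ are the sets of upper and lower bounds of $A$, and $A^\delta=(A^\uparrow)^\downarrow$. A nonempty subset $A$ of a space is irreducible if whenever $A\subseteq F_1\cup F_2$ with $F_1,F_2$ closed, $A\subseteq F_1$ or $A\subseteq F_2$. $X^{(<\omega)}$ is the set of nonempty finite subsets of $X$. $P_S(X)$ is the set of nonempty compact saturated (upper) subsets of $X$ with the upper Vietoris topology, basis $\{\square U: U\text{ open}\}$, $\square U=\{Q: Q\subseteq U\}$. A net is eventually in $U$ if from some index on all its terms lie in $U$. A net $(x_i)_{i\in I}$ $GSI_2$-converges to $x$ if there exists $\mathcal F\subseteq X^{(<\omega)}$ with $\{\uparrow G: G\in\mathcal F\}$ irreducible in $P_S(X)$ such that (i) for every open $U$, if $\uparrow G\subseteq U$ for some $G\in\mathcal F$ then $x_i\in U$ eventually, and (ii) $\bigcap_{G\in\mathcal F}\uparrow G\subseteq\uparrow x$. *)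

theory Defs
  imports "HOL-Analysis.Analysis"
begin

definition spec_le :: "'a topology \<Rightarrow> 'a \<Rightarrow> 'a \<Rightarrow> bool" where
  "spec_le X x y \<longleftrightarrow> x \<in> X closure_of {y}"

definition upset :: "'a topology \<Rightarrow> 'a set \<Rightarrow> 'a set" where
  "upset X A = {x \<in> topspace X. \<exists>a\<in>A. spec_le X a x}"

definition upper_bounds :: "'a topology \<Rightarrow> 'a set \<Rightarrow> 'a set" where
  "upper_bounds X A = {u \<in> topspace X. \<forall>a\<in>A. spec_le X a u}"

definition lower_bounds :: "'a topology \<Rightarrow> 'a set \<Rightarrow> 'a set" where
  "lower_bounds X A = {l \<in> topspace X. \<forall>a\<in>A. spec_le X l a}"

definition delta_cut :: "'a topology \<Rightarrow> 'a set \<Rightarrow> 'a set" where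
  "delta_cut X A = lower_bounds X (upper_bounds X A)"

definition irreducible_in :: "'a topology \<Rightarrow> 'a set \<Rightarrow> bool" where
  "irreducible_in X A \<longleftrightarrow> A \<noteq> {} \<and> A \<subseteq> topspace X \<and>
     (\<forall>F1 F2. closedin X F1 \<and> closedin X F2 \<and> A \<subseteq> F1 \<union> F2 \<longrightarrow> A \<subseteq> F1 \<or> A \<subseteq> F2)"

definition fin_subsets :: "'a topology \<Rightarrow> 'a set set" where
  "fin_subsets X = {G. G \<noteq> {} \<and> finite G \<and> G \<subseteq> topspace X}"

definition saturated_in :: "'a topology \<Rightarrow> 'a set \<Rightarrow> bool" where
  "saturated_in X A \<longleftrightarrow> A \<subseteq> topspace X \<and> upset X A = A"

definition smyth_carrier :: "'a topology \<Rightarrow> 'a set set" where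
  "smyth_carrier X = {Q. Q \<noteq> {} \<and> compactin X Q \<and> saturated_in X Q}"

definition box :: "'a topology \<Rightarrow> 'a set \<Rightarrow> 'a set set" where
  "box X U = {Q \<in> smyth_carrier X. Q \<subseteq> U}"

definition smyth_space :: "'a topology \<Rightarrow> 'a set topology" where
  "smyth_space X = topology_generated_by {box X U | U. openin X U}"

definition directed_set :: "'i set \<Rightarrow> ('i \<Rightarrow> 'i \<Rightarrow> bool) \<Rightarrow> bool" where
  "directed_set I le \<longleftrightarrow> I \<noteq> {} \<and> (\<forall>i\<in>I. le i i) \<and>
     (\<forall>i\<in>I. \<forall>j\<in>I. \<forall>k\<in>I. le i j \<and> le j k \<longrightarrow> le i k) \<and>
     (\<forall>i\<in>I. \<forall>j\<in>I. \<exists>k\<in>I. le i k \<and> le j k)"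

definition eventually_in :: "'i set \<Rightarrow> ('i \<Rightarrow> 'i \<Rightarrow> bool) \<Rightarrow> ('i \<Rightarrow> 'a) \<Rightarrow> 'a set \<Rightarrow> bool" where
  "eventually_in I le xn U \<longleftrightarrow> (\<exists>i0\<in>I. \<forall>i\<in>I. le i0 i \<longrightarrow> xn i \<in> U)"

definition gsi2_converges ::
  "'a topology \<Rightarrow> 'i set \<Rightarrow> ('i \<Rightarrow> 'i \<Rightarrow> bool) \<Rightarrow> ('i \<Rightarrow> 'a) \<Rightarrow> 'a \<Rightarrow> bool" where
  "gsi2_converges X I le xn x \<longleftrightarrow>
     (\<exists>\<F>. \<F> \<subseteq> fin_subsets X \<and>
        irreducible_in (smyth_space X) ((\<lambda>G. upset X G) ` \<F>) \<and>
        (\<forall>U. openin X U \<and> (\<exists>G\<in>\<F>. upset X G \<subseteq> U) \<longrightarrow> eventually_in I le xn U) \<and>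
        (\<Inter>G\<in>\<F>. upset X G) \<subseteq> upset X {x})"

end

theory Submission
  imports Defs
begin

lemma spec_le_refl: "a \<in> topspace X \<Longrightarrow> spec_le X a a"
  unfolding spec_le_def in_closure_of by auto

lemma spec_le_top: "spec_le X a y \<Longrightarrow> a \<in> topspace X"
  unfolding spec_le_def using in_closure_of by fastforce

lemma open_upper: "openin X U \<Longrightarrow> a \<in> U \<Longrightarrow> spec_le X a y \<Longrightarrow> y \<in> U"
  unfolding spec_le_def in_closure_of by auto

lemma spec_le_trans: "spec_le X a b \<Longrightarrow> spec_le X b c \<Longrightarrow> spec_le X a c"
  unfolding spec_le_def in_closure_of by auto

lemma upset_single_carrier:
  assumes "a \<in> topspace X"
  shows "upset X {a} \<in> smyth_carrier X"
proof -
  have ain: "a \<in> upset X {a}" using assms spec_le_refl[OF assms] unfolding upset_def by blast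
  then have ne: "upset X {a} \<noteq> {}" by blast
  have sub: "upset X {a} \<subseteq> topspace X" unfolding upset_def by auto
  have comp: "compactin X (upset X {a})"
    unfolding compactin_def
  proof (intro conjI sub allI impI)
    fix \<U> assume H: "Ball \<U> (openin X) \<and> upset X {a} \<subseteq> \<Union>\<U>"
    obtain U where U: "U \<in> \<U>" "a \<in> U" using H ain by blast
    have oU: "openin X U" using H U by blast
    have "upset X {a} \<subseteq> U"
    proof
      fix y assume "y \<in> upset X {a}"
      then have "spec_le X a y" unfolding upset_def by blast
      then show "y \<in> U" using open_upper[OF oU U(2)] by blast
    qed
    then show "\<exists>\<F>. finite \<F> \<and> \<F> \<subseteq> \<U> \<and> upset X {a} \<subseteq> \<Union>\<F>"
      using U by (intro exI[of _ "{U}"]) auto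
  qed
  have "upset X (upset X {a}) = upset X {a}"
  proof
    show "upset X (upset X {a}) \<subseteq> upset X {a}"
    proof
      fix y assume "y \<in> upset X (upset X {a})"
      then obtain b where b: "y \<in> topspace X" "b \<in> upset X {a}" "spec_le X b y"
        unfolding upset_def by blast
      then have "spec_le X a b" unfolding upset_def by blast
      then have "spec_le X a y" using b(3) by (rule spec_le_trans)
      then show "y \<in> upset X {a}" using b(1) unfolding upset_def by blast
    qed
    show "upset X {a} \<subseteq> upset X (upset X {a})"
    proof
      fix y assume y: "y \<in> upset X {a}"
      then have "y \<in> topspace X" unfolding upset_def by blast
      then have "spec_le X y y" by (rule spec_le_refl)
      then show "y \<in> upset X (upset X {a})" using y \<open>y \<in> topspace X\<close> unfolding upset_def by blast
    qed
  qed
  then show ?thesis using ne comp sub unfolding smyth_carrier_def saturated_in_def by auto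
qed

lemma cont_upset:
  "continuous_map X (smyth_space X) (\<lambda>a. upset X {a})"
  unfolding smyth_space_def
proof (rule continuous_on_generated_topo)
  fix B assume "B \<in> {box X U |U. openin X U}"
  then obtain U where U: "openin X U" "B = box X U" by auto
  have "(\<lambda>a. upset X {a}) -` B \<inter> topspace X = U"
  proof
    show "(\<lambda>a. upset X {a}) -` B \<inter> topspace X \<subseteq> U"
    proof
      fix a assume a: "a \<in> (\<lambda>a. upset X {a}) -` B \<inter> topspace X"
      then have "upset X {a} \<subseteq> U" using U unfolding box_def by auto
      moreover have at: "a \<in> topspace X" using a by blast
      moreover have "a \<in> upset X {a}" using at spec_le_refl[OF at] unfolding upset_def by blast
      ultimately show "a \<in> U" by auto
    qed
    show "U \<subseteq> (\<lambda>a. upset X {a}) -` B \<inter> topspace X"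
    proof
      fix a assume a: "a \<in> U"
      have at: "a \<in> topspace X" using a U openin_subset by blast
      have "upset X {a} \<subseteq> U"
      proof
        fix y assume "y \<in> upset X {a}"
        then have "spec_le X a y" unfolding upset_def by blast
        then show "y \<in> U" using open_upper[OF U(1) a] by blast
      qed
      then show "a \<in> (\<lambda>a. upset X {a}) -` B \<inter> topspace X"
        using U at upset_single_carrier[OF at] unfolding box_def by auto
    qed
  qed
  then show "openin X ((\<lambda>a. upset X {a}) -` B \<inter> topspace X)" using U by simp
next
  show "(\<lambda>a. upset X {a}) ` topspace X \<subseteq> \<Union> {box X U |U. openin X U}"
  proof
    fix Q assume "Q \<in> (\<lambda>a. upset X {a}) ` topspace X"
    then obtain a where a: "a \<in> topspace X" "Q = upset X {a}" by auto
    have "Q \<in> box X (topspace X)" using a upset_single_carrier[OF a(1)]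
      unfolding box_def smyth_carrier_def saturated_in_def by auto
    moreover have "box X (topspace X) \<in> {box X U |U. openin X U}" by auto
    ultimately show "Q \<in> \<Union> {box X U |U. openin X U}" by blast
  qed
qed

lemma irreducible_image:
  assumes "continuous_map X Y f" "irreducible_in X A"
  shows "irreducible_in Y (f ` A)"
  unfolding irreducible_in_def
proof (intro conjI allI impI)
  show "f ` A \<noteq> {}" using assms(2) unfolding irreducible_in_def by auto
  show "f ` A \<subseteq> topspace Y" using assms continuous_map_image_subset_topspace
    unfolding irreducible_in_def by (metis continuous_map_def image_mono order_trans)
next
  fix C1 C2 assume H: "closedin Y C1 \<and> closedin Y C2 \<and> f ` A \<subseteq> C1 \<union> C2"
  define P1 where "P1 = {x \<in> topspace X. f x \<in> C1}"
  define P2 where "P2 = {x \<in> topspace X. f x \<in> C2}"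
  have c1: "closedin X P1" unfolding P1_def
    using H assms(1) closedin_continuous_map_preimage by blast
  have c2: "closedin X P2" unfolding P2_def
    using H assms(1) closedin_continuous_map_preimage by blast
  have At: "A \<subseteq> topspace X" using assms(2) unfolding irreducible_in_def by blast
  have "A \<subseteq> P1 \<union> P2"
  proof
    fix z assume z: "z \<in> A"
    then have "f z \<in> C1 \<union> C2" using H by blast
    then show "z \<in> P1 \<union> P2" using z At unfolding P1_def P2_def by blast
  qed
  then have "A \<subseteq> P1 \<or> A \<subseteq> P2" using assms(2) c1 c2 unfolding irreducible_in_def by blast
  then show "f ` A \<subseteq> C1 \<or> f ` A \<subseteq> C2" unfolding P1_def P2_def by blast
qed

lemma irr_open_meet:
  assumes "irreducible_in X F" "openin X U" "openin X V" "U \<inter> F \<noteq> {}" "V \<inter> F \<noteq> {}"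
  shows "U \<inter> V \<inter> F \<noteq> {}"
proof
  assume "U \<inter> V \<inter> F = {}"
  then have "F \<subseteq> (topspace X - U) \<union> (topspace X - V)"
    using assms(1) unfolding irreducible_in_def by auto
  moreover have "closedin X (topspace X - U)" "closedin X (topspace X - V)"
    using assms(2,3) by auto
  ultimately have "F \<subseteq> topspace X - U \<or> F \<subseteq> topspace X - V"
    using assms(1) unfolding irreducible_in_def by blast
  then show False using assms(4,5) by auto
qed

theorem lemma3p6:
  fixes X :: "'a topology" and F :: "'a set" and x :: 'a
  assumes "t0_space X"
    and "irreducible_in X F"
    and "x \<in> delta_cut X F"
  shows "\<exists>(I :: 'a set set) le xn. directed_set I le \<and> (\<forall>i\<in>I. xn i \<in> F) \<and>
           gsi2_converges X I le xn x"
proof -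
  define I where "I = {U \<inter> F | U. openin X U \<and> U \<inter> F \<noteq> {}}"
  define le :: "'a set \<Rightarrow> 'a set \<Rightarrow> bool" where "le = (\<lambda>A B. B \<subseteq> A)"
  define xn :: "'a set \<Rightarrow> 'a" where "xn = (\<lambda>A. SOME a. a \<in> A)"
  have Ftop: "F \<subseteq> topspace X" "F \<noteq> {}" using assms(2) unfolding irreducible_in_def by auto
  have xnI: "xn A \<in> A" if "A \<in> I" for A
  proof -
    have "A \<noteq> {}" using that unfolding I_def by auto
    then show ?thesis unfolding xn_def by (simp add: some_in_eq)
  qed
  have dir: "directed_set I le"
    unfolding directed_set_def le_def
  proof (intro conjI ballI)
    show "I \<noteq> {}" using Ftop unfolding I_def by (auto intro!: exI[of _ "topspace X"])
  next
    fix i j assume "i \<in> I" "j \<in> I"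
    then obtain U V where UV: "openin X U" "U \<inter> F \<noteq> {}" "i = U \<inter> F"
      "openin X V" "V \<inter> F \<noteq> {}" "j = V \<inter> F" unfolding I_def by auto
    then have "U \<inter> V \<inter> F \<noteq> {}" using irr_open_meet[OF assms(2)] by blast
    then have "(U \<inter> V) \<inter> F \<in> I" using UV unfolding I_def by blast
    moreover have "(U \<inter> V) \<inter> F \<subseteq> i" "(U \<inter> V) \<inter> F \<subseteq> j" using UV by auto
    ultimately show "\<exists>k\<in>I. k \<subseteq> i \<and> k \<subseteq> j" by blast
  qed auto
  have inF: "\<forall>i\<in>I. xn i \<in> F" using xnI unfolding I_def by blast
  define FF where "FF = (\<lambda>a. {a}) ` F"
  have img: "(\<lambda>G. upset X G) ` FF = (\<lambda>a. upset X {a}) ` F"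
    unfolding FF_def by auto
  have "gsi2_converges X I le xn x"
    unfolding gsi2_converges_def
  proof (intro exI[of _ FF] conjI allI impI)
    show "FF \<subseteq> fin_subsets X" using Ftop unfolding FF_def fin_subsets_def by auto
    show "irreducible_in (smyth_space X) ((\<lambda>G. upset X G) ` FF)"
      unfolding img by (rule irreducible_image[OF cont_upset assms(2)])
  next
    fix U assume H: "openin X U \<and> (\<exists>G\<in>FF. upset X G \<subseteq> U)"
    then obtain a where a: "a \<in> F" "upset X {a} \<subseteq> U" unfolding FF_def by auto
    have at: "a \<in> topspace X" using a(1) Ftop(1) by blast
    have "a \<in> upset X {a}" using at spec_le_refl[OF at] unfolding upset_def by blast
    then have "a \<in> U" using a(2) by blast
    then have "U \<inter> F \<in> I" using H a unfolding I_def by blast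
    then show "eventually_in I le xn U"
      unfolding eventually_in_def le_def using xnI by blast
  next
    show "(\<Inter>G\<in>FF. upset X G) \<subseteq> upset X {x}"
    proof
      fix u assume "u \<in> (\<Inter>G\<in>FF. upset X G)"
      then have "u \<in> topspace X" "\<forall>a\<in>F. spec_le X a u"
        using Ftop unfolding FF_def upset_def by auto
      then have "u \<in> upper_bounds X F" unfolding upper_bounds_def by auto
      then have "spec_le X x u" using assms(3) unfolding delta_cut_def lower_bounds_def by auto
      then show "u \<in> upset X {x}" using \<open>u \<in> topspace X\<close> unfolding upset_def by auto
    qed
  qed
  then show ?thesis using dir inF by blast
qed

end
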